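(* Let $b>0$. For $\lambda\in\mathbb{C}\setminus[2,\infty)$ write $\lambda=-2\cos(\omega)$ with $\omega\in\Omega=\{\omega\in\mathbb{C}:\ \operatorname{Re}\omega\in[0,\pi),\ \operatorname{Im}\omega\in\mathbb{R}\}$, and define $$G_\lambda(x)=\frac{1}{2b\sin(\omega)}\,\frac{\sinh\left(\frac{\omega}{b}x\right)}{\sinh\left(\frac{\pi}{b}x\right)},\qquad x\in\mathbb{R}\setminus\{0\},\qquad G_\lambda(0)=\frac{1}{2\pi b}\,\frac{\omega}{\sin(\omega)}.$$ Then for every $\lambda\in\mathbb{C}\setminus[2,\infty)$, $$|G_\lambda(x)|\le|G_\lambda(0)|\quad\text{for all }x\in\mathbb{R}.$$
   Context: $G_\lambda(x-y)$ is the integral kernel of the resolvent $(W_0(b)-\lambda)^{-1}$, where $W_0(b)$ is multiplication by $2\cosh(2\pi bk)$ in Fourier space. The value $G_\lambda(0)$ is the limit of $G_\lambda(x)$ as $x\to0$. At $\omega=0$ (i.e. $\lambda=-2$) the expressions are understood by continuity in $\omega$: $\frac{\sinh(\omega x/b)}{\sin\omega}\to x/b$ and $\frac{\omega}{\sin\omega}\to1$. *)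

theory Defs
  imports "HOL-Analysis.Analysis"
begin

text \<open>Resolvent kernel G_lambda(x), written in terms of the parameter w = omega
  (lambda = -2 cos w, w in Omega).  At w = 0 the expressions are
  taken by continuity: sinh(w x / b)/sin w becomes x/b and
  w / sin w becomes 1.\<close>
definition G :: "real \<Rightarrow> complex \<Rightarrow> real \<Rightarrow> complex" where
  "G b w x =
    (if x = 0 then
       (if w = 0 then complex_of_real (1 / (2 * pi * b))
        else w / (complex_of_real (2 * pi * b) * sin w))
     else
       (if w = 0 then complex_of_real ((x / b) / (2 * b * sinh (pi * x / b)))
        else sinh (w * complex_of_real (x / b))
              / (complex_of_real (2 * b) * sin w * complex_of_real (sinh (pi * x / b)))))"

end

theory Submission
  imports Defs
begin
lemma Re_sinh_c: "Re (sinh z) = sinh (Re z) * cos (Im z)"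
  by (simp add: sinh_field_def Re_exp sinh_def cosh_def field_simps)
lemma Im_sinh_c: "Im (sinh z) = cosh (Re z) * sin (Im z)"
  by (simp add: sinh_field_def Im_exp sinh_def cosh_def field_simps)
lemma norm_sinh_sq: "norm (sinh z) ^ 2 = sinh (Re z) ^ 2 + sin (Im z) ^ 2"
proof -
  have "norm (sinh z) ^ 2 = (sinh (Re z) * cos (Im z))^2 + (cosh (Re z) * sin (Im z))^2"
    unfolding cmod_power2 Re_sinh_c Im_sinh_c ..
  also have "\<dots> = sinh (Re z) ^ 2 * cos (Im z) ^ 2 + cosh (Re z) ^ 2 * sin (Im z) ^ 2"
    by (simp only: power_mult_distrib)
  also have "\<dots> = sinh (Re z) ^ 2 * (1 - sin (Im z) ^ 2) + (sinh (Re z) ^ 2 + 1) * sin (Im z) ^ 2"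
    by (simp only: cosh_square_eq cos_squared_eq)
  also have "\<dots> = sinh (Re z) ^ 2 + sin (Im z) ^ 2"
    by algebra
  finally show ?thesis .
qed

lemma sinh_scale: fixes c y :: real assumes "0 \<le> c" "c \<le> 1" "0 \<le> y" shows "sinh (c * y) \<le> c * sinh y"
proof -
  have "c * sinh 0 - sinh (c * 0) \<le> c * sinh y - sinh (c * y)"
  proof (rule DERIV_nonneg_imp_increasing_open[of 0 y])
    fix x :: real assume x: "0 < x" "x < y"
    have d: "((\<lambda>v. c * sinh v - sinh (c * v)) has_real_derivative (c * cosh x - c * cosh (c * x))) (at x)"
      by (auto intro!: derivative_eq_intros)
    have "cosh (c * x) \<le> cosh x" using assms x by (subst cosh_real_nonneg_le_iff) (auto simp: mult_left_le_one_le)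
    then have "0 \<le> c * cosh x - c * cosh (c * x)" using assms by (simp add: right_diff_distrib[symmetric])
    with d show "\<exists>z. ((\<lambda>v. c * sinh v - sinh (c * v)) has_real_derivative z) (at x) \<and> 0 \<le> z" by blast
  next
    show "continuous_on {0..y} (\<lambda>v. c * sinh v - sinh (c * v))" by (intro continuous_intros)
  qed (use assms in simp_all)
  then show ?thesis by simp
qed

lemma abs_le_abs_sinh: fixes y :: real shows "\<bar>y\<bar> \<le> \<bar>sinh y\<bar>"
  using real_le_abs_sinh[of y] by (simp add: sinh_field_def exp_minus)

lemma absL: fixes c t :: real assumes "0 \<le> c" shows "\<bar>c * t\<bar> = c * \<bar>t\<bar>"
  using abs_mult[of c t] abs_of_nonneg[OF assms] by metis

lemma sinh_abs_scale: fixes c t :: real assumes "0 \<le> c"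
  shows "\<bar>sinh (c * t)\<bar> = sinh (c * \<bar>t\<bar>)"
  using sinh_real_abs[of "c * t"] absL[OF assms, of t] by metis

lemma pi_le_sinh: fixes T :: real assumes "0 \<le> T" shows "pi * T \<le> sinh (pi * T)"
proof -
  have "0 \<le> pi * T" using assms by simp
  then show ?thesis using abs_le_abs_sinh[of "pi * T"] by (metis abs_of_nonneg sinh_real_nonneg_iff)
qed

lemma key_ineq:
  fixes w :: complex and t :: real
  assumes "0 \<le> Re w" "Re w < pi"
  shows "norm (sinh (w * complex_of_real t)) * pi \<le> cmod w * \<bar>sinh (pi * t)\<bar>"
proof -
  define a where "a = Re w"
  define c where "c = Im w"
  define T where "T = \<bar>t\<bar>"
  define P where "P = sinh (pi * T)"
  have T: "0 \<le> T" unfolding T_def by simp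
  have a: "0 \<le> a" "a < pi" using assms a_def by auto
  have Peq: "\<bar>sinh (pi * t)\<bar> = P" unfolding P_def T_def using sinh_abs_scale[of pi t] by simp
  have piP: "pi * T \<le> P" unfolding P_def using pi_le_sinh[OF T] .
  have A: "pi * \<bar>sinh (a * t)\<bar> \<le> a * P"
  proof -
    have c1: "a / pi \<le> 1" using a by simp
    have "sinh ((a/pi) * (pi * T)) \<le> (a/pi) * sinh (pi * T)"
      using a c1 T by (intro sinh_scale) auto
    moreover have "(a/pi) * (pi * T) = a * T" by simp
    ultimately have "sinh (a * T) \<le> (a/pi) * P" unfolding P_def by simp
    moreover have "\<bar>sinh (a * t)\<bar> = sinh (a * T)" unfolding T_def using sinh_abs_scale[OF a(1)] .
    ultimately have "pi * \<bar>sinh (a * t)\<bar> \<le> pi * ((a/pi) * P)"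
      by (intro mult_left_mono) auto
    also have "pi * ((a/pi) * P) = a * P" by simp
    finally show ?thesis .
  qed
  have B: "pi * \<bar>sin (c * t)\<bar> \<le> \<bar>c\<bar> * P"
  proof -
    have "\<bar>sin (c * t)\<bar> \<le> \<bar>c\<bar> * T"
      using abs_sin_x_le_abs_x[of "c * t"] unfolding T_def by (simp only: abs_mult)
    then have "pi * \<bar>sin (c * t)\<bar> \<le> pi * (\<bar>c\<bar> * T)"
      by (intro mult_left_mono) auto
    also have "\<dots> = \<bar>c\<bar> * (pi * T)" by (simp only: mult_ac)
    also have "\<dots> \<le> \<bar>c\<bar> * P"
      using piP by (intro mult_left_mono) auto
    finally show ?thesis .
  qed
  have n: "norm (sinh (w * complex_of_real t)) ^ 2 = sinh (a * t) ^ 2 + sin (c * t) ^ 2"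
    by (simp add: norm_sinh_sq a_def c_def)
  have w2: "cmod w ^ 2 = a^2 + c^2" by (simp add: cmod_power2 a_def c_def)
  have A2: "(pi * \<bar>sinh (a * t)\<bar>)^2 \<le> (a * P)^2"
    using A by (intro power_mono) auto
  have B2: "(pi * \<bar>sin (c * t)\<bar>)^2 \<le> (\<bar>c\<bar> * P)^2"
    using B by (intro power_mono) auto
  define X where "X = norm (sinh (w * complex_of_real t))"
  have e1: "(X * pi)^2 = pi^2 * sinh (a * t)^2 + pi^2 * sin (c * t)^2"
    unfolding X_def power_mult_distrib n by (simp add: algebra_simps)
  have e2: "(cmod w * P)^2 = a^2 * P^2 + c^2 * P^2"
    unfolding power_mult_distrib w2 by (simp add: distrib_right)
  have A3: "pi^2 * sinh (a * t)^2 \<le> a^2 * P^2" using A2 unfolding power_mult_distrib power2_abs .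
  have B3: "pi^2 * sin (c * t)^2 \<le> c^2 * P^2" using B2 unfolding power_mult_distrib power2_abs .
  have "(X * pi)^2 \<le> (cmod w * P)^2"
    using e1 e2 A3 B3 by linarith
  then have "X * pi \<le> cmod w * P" by (rule power2_le_imp_le) (simp add: P_def T)
  then show ?thesis unfolding X_def Peq .
qed

theorem proposition3p2:
  fixes b :: real and lam w :: complex
  assumes "b > 0"
    and "lam \<notin> complex_of_real ` {2..}"
    and "Re w \<in> {0..<pi}"
    and "lam = - 2 * cos w"
  shows "\<forall>x::real. norm (G b w x) \<le> norm (G b w 0)"
proof
  fix x :: real
  show "norm (G b w x) \<le> norm (G b w 0)"
  proof (cases "x = 0")
    case True then show ?thesis by simp
  next
    case x: False
    define t where "t = x / b"
    have t: "t \<noteq> 0" using x assms(1) t_def by simp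
    have D: "\<bar>sinh (pi * t)\<bar> > 0" using t by simp
    have xb: "pi * x / b = pi * t" by (simp add: t_def)
    show ?thesis
    proof (cases "w = 0")
      case True
      have "pi * \<bar>t\<bar> \<le> \<bar>sinh (pi * t)\<bar>"
        using abs_le_abs_sinh[of "pi * t"] by (simp add: abs_mult)
      then have "\<bar>t\<bar> * (2 * pi * b) \<le> 1 * (2 * b * \<bar>sinh (pi * t)\<bar>)"
        using assms(1) by (simp add: algebra_simps)
      then have le: "\<bar>t\<bar> / (2 * b * \<bar>sinh (pi * t)\<bar>) \<le> 1 / (2 * pi * b)"
        using D assms(1) by (subst frac_le_eq) (simp_all add: field_simps)
      have g1: "G b w x = complex_of_real (t / (2 * b * sinh (pi * t)))"
        using True x by (simp add: G_def xb t_def[symmetric])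
      have g0: "G b w 0 = complex_of_real (1 / (2 * pi * b))"
        using True by (simp add: G_def)
      have "norm (G b w x) = \<bar>t\<bar> / (2 * b * \<bar>sinh (pi * t)\<bar>)"
        unfolding g1 norm_of_real using assms(1) by (simp add: abs_mult)
      moreover have "norm (G b w 0) = 1 / (2 * pi * b)"
        unfolding g0 norm_of_real using assms(1) by simp
      ultimately show ?thesis using le by simp
    next
      case False
      have sw: "sin w \<noteq> 0"
      proof
        assume "sin w = 0"
        then obtain n :: int where n: "w = of_real (n * pi)" by (auto simp: sin_eq_0)
        then have "Re w = n * pi" by simp
        with assms(3) have "0 \<le> real_of_int n * pi" "real_of_int n * pi < 1 * pi" by auto
        then have "0 \<le> real_of_int n" "real_of_int n < 1"
          using pi_gt_zero by (auto simp: zero_le_mult_iff)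
        then have "n = 0" by linarith
        with n False show False by simp
      qed
      define S where "S = norm (sin w)"
      define X where "X = norm (sinh (w * complex_of_real t))"
      define Dd where "Dd = \<bar>sinh (pi * t)\<bar>"
      have S: "S > 0" using sw S_def by simp
      have K: "X * pi \<le> cmod w * Dd"
        unfolding X_def Dd_def using assms(3) by (intro key_ineq) auto
      have pos: "0 < 2 * pi * b * S * Dd" using S D assms(1) Dd_def by simp
      have r1: "X / (2 * b * S * Dd) = (X * pi) / (2 * pi * b * S * Dd)"
        using pos by (simp add: field_simps)
      have r2: "cmod w / (2 * pi * b * S) = (cmod w * Dd) / (2 * pi * b * S * Dd)"
        using pos D Dd_def by (simp add: field_simps)
      have le: "X / (2 * b * S * Dd) \<le> cmod w / (2 * pi * b * S)"
        unfolding r1 r2 using K pos by (intro divide_right_mono) auto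
      have g1: "G b w x = sinh (w * complex_of_real t)
              / (complex_of_real (2 * b) * sin w * complex_of_real (sinh (pi * t)))"
        using False x by (simp add: G_def xb t_def[symmetric])
      have g0: "G b w 0 = w / (complex_of_real (2 * pi * b) * sin w)"
        using False by (simp add: G_def)
      have "norm (G b w x) = X / (2 * b * S * Dd)"
        unfolding g1 X_def S_def Dd_def norm_divide norm_mult norm_of_real using assms(1) by simp
      moreover have "norm (G b w 0) = cmod w / (2 * pi * b * S)"
        unfolding g0 S_def norm_divide norm_mult norm_of_real using assms(1) by simp
      ultimately show ?thesis using le by simp
    qed
  qed
qed

end
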